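(* Let $G$ be an $(N,k)$ Adinkra with vertex set $V$, with the matrices $\gamma_1,\dots,\gamma_N$ defined as in the context, and let $M=\gamma_{i_1}\gamma_{i_2}\cdots\gamma_{i_t}$ for some $i_1,\dots,i_t\in\{1,\dots,N\}$. Then $M_{x,x}\neq0$ for some $x\in V$ if and only if $M_{x,x}\neq 0$ for all $x\in V$.
   Context: An Adinkra of dimension $N$ is a finite connected simple graph $G=(V,E)$ with: a bipartition of $V$ into bosons and fermions (every edge joins a boson and a fermion); a height function (irrelevant here); a coloring of $E$ by colors $\{1,\dots,N\}$ such that each vertex is incident to exactly one edge of each color; an edge parity $\pi:E\to\mathbb{Z}_2$ (parity $1$ = dashed); such that every path with edge colors $(i,j)$, $i\ne j$, lies in a unique 4-cycle with colors $(i,j,i,j)$, each having an odd number of dashed edges. If $|V|=2^{N-k}$, $G$ is an $(N,k)$ Adinkra; it has $n=2^{N-k-1}$ bosons $b_1,\dots,b_n$ and $n$ fermions $f_1,\dots,f_n$. For each color $i$, $L_i$ is the $n\times n$ matrix with $(L_i)_{r,s}=+1$ if $b_r,f_s$ are joined by a solid edge of color $i$, $-1$ if joined by a dashed edge of color $i$, and $0$ otherwise. $\gamma_i$ is the $2n\times 2n$ matrix $\begin{pmatrix}0&L_i\\ L_i^{T}&0\end{pmatrix}$ with rows and columns indexed by $V$ (bosons first, then fermions). *)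

theory Defs
  imports Main
begin

text \<open>A graph with vertex set V (of type 'v) and edge set E, edges being
  two-element subsets of V. bos is the set of bosons (fermions are V - bos),
  col is the edge colouring, par the edge parity (True = dashed, i.e. parity 1).
  The height function is irrelevant for the statement and omitted.\<close>

definition four_cycle_ok ::
  "'v set set \<Rightarrow> ('v set \<Rightarrow> nat) \<Rightarrow> ('v set \<Rightarrow> bool) \<Rightarrow> 'v \<Rightarrow> 'v \<Rightarrow> 'v \<Rightarrow> nat \<Rightarrow> nat \<Rightarrow> bool" where
  "four_cycle_ok E col par v0 v1 v2 i j \<longleftrightarrow>
     (\<exists>!v3. {v2, v3} \<in> E \<and> col {v2, v3} = i \<and> {v3, v0} \<in> E \<and> col {v3, v0} = j) \<and>
     (\<forall>v3. {v2, v3} \<in> E \<and> col {v2, v3} = i \<and> {v3, v0} \<in> E \<and> col {v3, v0} = j \<longrightarrow>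
        odd (length (filter par [{v0, v1}, {v1, v2}, {v2, v3}, {v3, v0}])))"

definition adinkra ::
  "'v set \<Rightarrow> 'v set set \<Rightarrow> 'v set \<Rightarrow> ('v set \<Rightarrow> nat) \<Rightarrow> ('v set \<Rightarrow> bool) \<Rightarrow> nat \<Rightarrow> bool" where
  "adinkra V E bos col par N \<longleftrightarrow>
     finite V \<and>
     \<comment> \<open>simple graph: every edge is a 2-element subset of V\<close>
     (\<forall>e\<in>E. \<exists>u w. u \<in> V \<and> w \<in> V \<and> u \<noteq> w \<and> e = {u, w}) \<and>
     \<comment> \<open>connected\<close>
     (\<forall>u\<in>V. \<forall>w\<in>V. (u, w) \<in> {(a, b). {a, b} \<in> E}\<^sup>*) \<and>
     \<comment> \<open>bipartition into bosons and fermions; every edge joins a boson and a fermion\<close>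
     bos \<subseteq> V \<and>
     (\<forall>u w. {u, w} \<in> E \<longrightarrow> (u \<in> bos \<longleftrightarrow> w \<notin> bos)) \<and>
     \<comment> \<open>colouring by colours 1..N, one edge of each colour at every vertex\<close>
     (\<forall>e\<in>E. col e \<in> {1..N}) \<and>
     (\<forall>v\<in>V. \<forall>i\<in>{1..N}. \<exists>!e. e \<in> E \<and> v \<in> e \<and> col e = i) \<and>
     \<comment> \<open>every (i,j)-path lies in a unique (i,j,i,j) 4-cycle, with an odd number of dashed edges\<close>
     (\<forall>v0 v1 v2 i j. i \<noteq> j \<and> {v0, v1} \<in> E \<and> col {v0, v1} = i \<and>
         {v1, v2} \<in> E \<and> col {v1, v2} = j \<longrightarrow> four_cycle_ok E col par v0 v1 v2 i j)"

definition NK_adinkra ::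
  "'v set \<Rightarrow> 'v set set \<Rightarrow> 'v set \<Rightarrow> ('v set \<Rightarrow> nat) \<Rightarrow> ('v set \<Rightarrow> bool) \<Rightarrow> nat \<Rightarrow> nat \<Rightarrow> bool" where
  "NK_adinkra V E bos col par N k \<longleftrightarrow> adinkra V E bos col par N \<and> card V = 2 ^ (N - k)"

definition Lmat :: "'v set set \<Rightarrow> ('v set \<Rightarrow> nat) \<Rightarrow> ('v set \<Rightarrow> bool) \<Rightarrow> nat \<Rightarrow> 'v \<Rightarrow> 'v \<Rightarrow> int" where
  "Lmat E col par i b f =
     (if {b, f} \<in> E \<and> col {b, f} = i then (if par {b, f} then -1 else 1) else 0)"

text \<open>gamma_i = [[0, L_i],[L_i^T, 0]], rows/columns indexed by V.\<close>
definition gamma :: "'v set \<Rightarrow> 'v set set \<Rightarrow> ('v set \<Rightarrow> nat) \<Rightarrow> ('v set \<Rightarrow> bool) \<Rightarrow> nat \<Rightarrow> 'v \<Rightarrow> 'v \<Rightarrow> int" where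
  "gamma bos E col par i x y =
     (if x \<in> bos \<and> y \<notin> bos then Lmat E col par i x y
      else if x \<notin> bos \<and> y \<in> bos then Lmat E col par i y x
      else 0)"

definition mmul :: "'v set \<Rightarrow> ('v \<Rightarrow> 'v \<Rightarrow> int) \<Rightarrow> ('v \<Rightarrow> 'v \<Rightarrow> int) \<Rightarrow> 'v \<Rightarrow> 'v \<Rightarrow> int" where
  "mmul V A B x y = (\<Sum>z\<in>V. A x z * B z y)"

definition midt :: "'v \<Rightarrow> 'v \<Rightarrow> int" where
  "midt x y = (if x = y then 1 else 0)"

fun gprod :: "'v set \<Rightarrow> (nat \<Rightarrow> 'v \<Rightarrow> 'v \<Rightarrow> int) \<Rightarrow> nat list \<Rightarrow> 'v \<Rightarrow> 'v \<Rightarrow> int" where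
  "gprod V g [] = midt"
| "gprod V g (i # is) = mmul V (g i) (gprod V g is)"

end

theory Submission
  imports Defs
begin

definition nb :: "'v set set \<Rightarrow> ('v set \<Rightarrow> nat) \<Rightarrow> nat \<Rightarrow> 'v \<Rightarrow> 'v" where
  "nb E col i x = (THE y. {x,y} \<in> E \<and> col {x,y} = i)"

fun walk :: "'v set set \<Rightarrow> ('v set \<Rightarrow> nat) \<Rightarrow> nat list \<Rightarrow> 'v \<Rightarrow> 'v" where
  "walk E col [] x = x"
| "walk E col (i # is) x = walk E col is (nb E col i x)"

context
  fixes V :: "'v set" and E :: "'v set set" and bos :: "'v set"
    and col :: "'v set \<Rightarrow> nat" and par :: "'v set \<Rightarrow> bool" and N :: nat
  assumes adk: "adinkra V E bos col par N"
begin

lemma adk_fin: "finite V" using adk unfolding adinkra_def by (elim conjE)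
lemma adk_edge: "\<forall>e\<in>E. \<exists>u w. u \<in> V \<and> w \<in> V \<and> u \<noteq> w \<and> e = {u, w}"
  using adk unfolding adinkra_def by (elim conjE)
lemma adk_conn: "\<forall>u\<in>V. \<forall>w\<in>V. (u, w) \<in> {(a, b). {a, b} \<in> E}\<^sup>*"
  using adk unfolding adinkra_def by (elim conjE)
lemma adk_bip: "\<forall>u w. {u, w} \<in> E \<longrightarrow> (u \<in> bos \<longleftrightarrow> w \<notin> bos)"
  using adk unfolding adinkra_def by (elim conjE)
lemma adk_col: "\<forall>e\<in>E. col e \<in> {1..N}"
  using adk unfolding adinkra_def by (elim conjE)
lemma adk_one: "\<forall>v\<in>V. \<forall>i\<in>{1..N}. \<exists>!e. e \<in> E \<and> v \<in> e \<and> col e = i"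
  using adk unfolding adinkra_def by (elim conjE)
lemma adk_cyc: "\<forall>v0 v1 v2 i j. i \<noteq> j \<and> {v0, v1} \<in> E \<and> col {v0, v1} = i \<and>
         {v1, v2} \<in> E \<and> col {v1, v2} = j \<longrightarrow> four_cycle_ok E col par v0 v1 v2 i j"
  using adk unfolding adinkra_def by (elim conjE)

lemma edgeV: "{x,y} \<in> E \<Longrightarrow> x \<in> V \<and> y \<in> V \<and> x \<noteq> y"
proof -
  assume a: "{x,y} \<in> E"
  from adk_edge a obtain u w where "u \<in> V" "w \<in> V" "u \<noteq> w" "{x,y} = {u,w}"
    by blast
  then show ?thesis by (metis doubleton_eq_iff)
qed

lemma colrange: "{x,y} \<in> E \<Longrightarrow> col {x,y} \<in> {1..N}"
  using adk_col by blast

lemma nb_ex: "x \<in> V \<Longrightarrow> i \<in> {1..N} \<Longrightarrow> \<exists>!y. {x,y} \<in> E \<and> col {x,y} = i"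
proof -
  assume x: "x \<in> V" and i: "i \<in> {1..N}"
  from adk_one x i have "\<exists>!e. e \<in> E \<and> x \<in> e \<and> col e = i" by blast
  then obtain e where e: "e \<in> E" "x \<in> e" "col e = i"
    and un: "\<And>e'. e' \<in> E \<and> x \<in> e' \<and> col e' = i \<Longrightarrow> e' = e"
    by blast
  from adk_edge e obtain u w where "e = {u,w}" by blast
  with e obtain y where ey: "e = {x,y}" by blast
  show ?thesis
  proof (rule ex1I[of _ y])
    show "{x,y} \<in> E \<and> col {x,y} = i" using e ey by simp
  next
    fix y' assume "{x,y'} \<in> E \<and> col {x,y'} = i"
    then have "{x,y'} = {x,y}" using un ey by blast
    moreover have "x \<noteq> y'" using edgeV \<open>{x,y'} \<in> E \<and> col {x,y'} = i\<close> by blast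
    ultimately show "y' = y" by (metis doubleton_eq_iff)
  qed
qed

lemma nb_prop: "x \<in> V \<Longrightarrow> i \<in> {1..N} \<Longrightarrow> {x, nb E col i x} \<in> E \<and> col {x, nb E col i x} = i"
  unfolding nb_def using nb_ex by (rule theI')

lemma nb_uniq: "x \<in> V \<Longrightarrow> {x,y} \<in> E \<Longrightarrow> col {x,y} = i \<Longrightarrow> y = nb E col i x"
proof -
  assume a: "x \<in> V" "{x,y} \<in> E" "col {x,y} = i"
  then have i: "i \<in> {1..N}" using colrange by blast
  show ?thesis unfolding nb_def
    by (rule sym, rule the1_equality[OF nb_ex[OF a(1) i]]) (use a in simp)
qed

lemma nbV: "x \<in> V \<Longrightarrow> i \<in> {1..N} \<Longrightarrow> nb E col i x \<in> V"
  using nb_prop edgeV by blast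

lemma nb_inv: "x \<in> V \<Longrightarrow> i \<in> {1..N} \<Longrightarrow> nb E col i (nb E col i x) = x"
proof -
  assume x: "x \<in> V" and i: "i \<in> {1..N}"
  let ?y = "nb E col i x"
  have "{x,?y} \<in> E" "col {x,?y} = i" using nb_prop[OF x i] by auto
  then have "{?y,x} \<in> E" "col {?y,x} = i" by (auto simp: insert_commute)
  then show ?thesis using nb_uniq nbV[OF x i] by metis
qed

lemma nb_comm: "x \<in> V \<Longrightarrow> i \<in> {1..N} \<Longrightarrow> j \<in> {1..N} \<Longrightarrow>
   nb E col i (nb E col j x) = nb E col j (nb E col i x)"
proof (cases "i = j")
  case True then show ?thesis by simp
next
  case False
  assume x: "x \<in> V" and i: "i \<in> {1..N}" and j: "j \<in> {1..N}"
  define v1 where "v1 = nb E col i x"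
  define v2 where "v2 = nb E col j v1"
  have v1V: "v1 \<in> V" using nbV x i v1_def by blast
  have v2V: "v2 \<in> V" using nbV v1V j v2_def by blast
  have e1: "{x,v1} \<in> E" "col {x,v1} = i" using nb_prop[OF x i] v1_def by auto
  have e2: "{v1,v2} \<in> E" "col {v1,v2} = j" using nb_prop[OF v1V j] v2_def by auto
  have "four_cycle_ok E col par x v1 v2 i j"
    using adk_cyc False e1 e2 by blast
  then obtain v3 where v3: "{v2, v3} \<in> E" "col {v2, v3} = i" "{v3, x} \<in> E" "col {v3, x} = j"
    unfolding four_cycle_ok_def by blast
  have a: "v3 = nb E col i v2" using nb_uniq v2V v3 by blast
  have "{x,v3} \<in> E" "col {x,v3} = j" using v3 by (auto simp: insert_commute)
  then have b: "v3 = nb E col j x" using nb_uniq x by blast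
  have "nb E col i (nb E col j x) = nb E col i (nb E col i v2)" using a b by simp
  also have "\<dots> = v2" using nb_inv v2V i by blast
  finally show ?thesis using v2_def v1_def by simp
qed

lemma walkV: "x \<in> V \<Longrightarrow> set is \<subseteq> {1..N} \<Longrightarrow> walk E col is x \<in> V"
  by (induction "is" arbitrary: x) (auto simp: nbV)

lemma walk_comm: "x \<in> V \<Longrightarrow> set is \<subseteq> {1..N} \<Longrightarrow> j \<in> {1..N} \<Longrightarrow>
   walk E col is (nb E col j x) = nb E col j (walk E col is x)"
proof (induction "is" arbitrary: x)
  case Nil then show ?case by simp
next
  case (Cons i "is")
  then have i: "i \<in> {1..N}" by simp
  have "walk E col (i # is) (nb E col j x) = walk E col is (nb E col j (nb E col i x))"
    using nb_comm Cons.prems i by simp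
  also have "\<dots> = nb E col j (walk E col is (nb E col i x))"
    using Cons nbV i by simp
  finally show ?case by simp
qed

lemma gamma_nz: "gamma bos E col par i x y \<noteq> 0 \<longleftrightarrow> {x,y} \<in> E \<and> col {x,y} = i"
proof (cases "{x,y} \<in> E")
  case True
  then have "x \<in> bos \<longleftrightarrow> y \<notin> bos" using adk_bip by blast
  then show ?thesis using True
    unfolding gamma_def Lmat_def by (auto simp: insert_commute)
next
  case False
  then show ?thesis unfolding gamma_def Lmat_def by (auto simp: insert_commute)
qed

lemma gprod_nz: "x \<in> V \<Longrightarrow> set is \<subseteq> {1..N} \<Longrightarrow>
  gprod V (gamma bos E col par) is x y \<noteq> 0 \<longleftrightarrow> y = walk E col is x"
proof (induction "is" arbitrary: x)
  case Nil then show ?case by (auto simp: midt_def)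
next
  case (Cons i "is")
  then have i: "i \<in> {1..N}" and iss: "set is \<subseteq> {1..N}" by auto
  let ?z = "nb E col i x"
  let ?g = "gamma bos E col par"
  have zV: "?z \<in> V" using nbV Cons.prems i by blast
  have fin: "finite V" using adk_fin .
  have "gprod V ?g (i # is) x y = (\<Sum>z\<in>V. ?g i x z * gprod V ?g is z y)"
    by (simp add: mmul_def)
  also have "\<dots> = ?g i x ?z * gprod V ?g is ?z y"
  proof (rule sum.remove[OF fin zV, THEN trans])
    have "\<And>z. z \<in> V - {?z} \<Longrightarrow> ?g i x z = 0"
      using gamma_nz nb_uniq Cons.prems by blast
    then show "?g i x ?z * gprod V ?g is ?z y + (\<Sum>z\<in>V - {?z}. ?g i x z * gprod V ?g is z y)
        = ?g i x ?z * gprod V ?g is ?z y" by simp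
  qed
  finally have eq: "gprod V ?g (i # is) x y = ?g i x ?z * gprod V ?g is ?z y" .
  have "?g i x ?z \<noteq> 0" using gamma_nz nb_prop Cons.prems i by blast
  then show ?case using eq Cons.IH[OF zV iss] by simp
qed

lemma walk_fix: "x \<in> V \<Longrightarrow> set is \<subseteq> {1..N} \<Longrightarrow> walk E col is x = x \<Longrightarrow> y \<in> V \<Longrightarrow>
  walk E col is y = y"
proof -
  assume x: "x \<in> V" and iss: "set is \<subseteq> {1..N}" and w: "walk E col is x = x" and y: "y \<in> V"
  have "(x, y) \<in> {(a, b). {a, b} \<in> E}\<^sup>*" using adk_conn x y by blast
  then have "y \<in> V \<and> walk E col is y = y"
  proof (induction rule: rtrancl_induct)
    case base then show ?case using x w by simp
  next
    case (step y z)
    then have yz: "{y,z} \<in> E" by simp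
    have c: "col {y,z} \<in> {1..N}" using colrange yz by blast
    have zeq: "z = nb E col (col {y,z}) y" using nb_uniq step yz by blast
    have "walk E col is z = nb E col (col {y,z}) (walk E col is y)"
      using zeq walk_comm step iss c by metis
    then show ?case using step zeq edgeV yz by simp
  qed
  then show ?thesis by simp
qed

end

theorem mainTheorem12:
  fixes V :: "'v set" and E :: "'v set set" and bos :: "'v set"
    and col :: "'v set \<Rightarrow> nat" and par :: "'v set \<Rightarrow> bool"
    and N k :: nat and "is" :: "nat list"
  assumes "NK_adinkra V E bos col par N k"
    and "set is \<subseteq> {1..N}"
  shows "(\<exists>x\<in>V. gprod V (gamma bos E col par) is x x \<noteq> 0) \<longleftrightarrow>
         (\<forall>x\<in>V. gprod V (gamma bos E col par) is x x \<noteq> 0)"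
proof -
  have adk: "adinkra V E bos col par N" using assms(1) unfolding NK_adinkra_def by blast
  have V: "\<And>x. x \<in> V \<Longrightarrow> gprod V (gamma bos E col par) is x x \<noteq> 0 \<longleftrightarrow> walk E col is x = x"
    using gprod_nz[OF adk _ assms(2)] by metis
  have "V \<noteq> {}" using assms(1) unfolding NK_adinkra_def by (metis card.empty zero_neq_numeral power_not_zero)
  then show ?thesis using V walk_fix[OF adk _ assms(2)] by blast
qed

end
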